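(* Under the Setting, Algorithm and Strong convexity assumption in the context (with $a_k\in(0,1]$, $A_k>0$), suppose $$\min_{\{\mathcal A\subset I:\,|\mathcal A|=\lceil (N-s+1)/2\rceil\}}\sum_{k\in\mathcal A}\rho_k\eta_k>\frac{(1-a_s)D_{\mathcal X}^2}{A_s}+\frac12\sum_{k\in\mathcal B}\rho_k\gamma_kL_f^2+\frac12\sum_{k\in\mathcal N}\rho_k\gamma_kL_{g,\mathcal X}^2,$$ and let $\bar x_{N,s}=\sum_{k\in\mathcal B}\rho_kx_k/\sum_{k\in\mathcal B}\rho_k$. Then $$f(\bar x_{N,s})-f(x^* )\le\frac{2(1-a_s)D_{\mathcal X}^2/A_s+\sum_{k\in\mathcal B}\rho_k\gamma_kL_f^2+\sum_{k\in\mathcal N}\rho_k\gamma_kL_{g,\mathcal X}^2}{2\min_{\{\mathcal A\subset I:|\mathcal A|=\lceil(N-s+1)/2\rceil\}}\sum_{k\in\mathcal A}\rho_k}$$ and $$G(\bar x_{N,s})\le\frac{\sum_{k\in\mathcal B}\rho_k(\eta_k+\varepsilon_k)}{\sum_{k\in\mathcal B}\rho_k}.$$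
   Context: Setting. $\mathcal X\subset\mathbb R^n$ is convex and compact; $f:\mathcal X\to\mathbb R$ is convex and $L_f$-Lipschitz; $\Delta\subset\mathbb R^d$ is compact; $g:\mathcal X\times\Delta\to\mathbb R$ is such that for every $\delta\in\Delta$, $x\mapsto g(x,\delta)$ is convex and $L_{g,\mathcal X}$-Lipschitz, and for every $x\in\mathcal X$, $\delta\mapsto g(x,\delta)$ is $L_{g,\Delta}$-Lipschitz. Let $G(x):=\max_{\delta\in\Delta}g(x,\delta)$ and assume the problem $\min_{x\in\mathcal X}\{f(x):G(x)\le0\}$ has an optimal solution $x^*$. Norms are Euclidean. $f'(x)$ denotes a subgradient of $f$ at $x$ and $g'(x,\delta)$ a subgradient of $g(\cdot,\delta)$ at $x$. Let $\omega_{\mathcal X}:\mathcal X\to\mathbb R$ be continuously differentiable and $1$-strongly convex; $V(x,z):=\omega_{\mathcal X}(z)-\omega_{\mathcal X}(x)-\langle\nabla\omega_{\mathcal X}(x),z-x\rangle$; prox-mapping $P_{x,\mathcal X}(y):=\arg\min_{z\in\mathcal X}\{\langle y,z\rangle+V(x,z)\}$; $D_{\mathcal X}:=\sqrt{\max_{x,z\in\mathcal X}V(x,z)}$. Algorithm (inexact CSA). Inputs: $N\ge1$, $x_1\in\mathcal X$, tolerances $\eta_k>0$, step-sizes $\gamma_k>0$. For $k=1,\dots,N$: choose some $\delta_k\in\Delta$ (an approximate maximizer of $g(x_k,\cdot)$); set $h_k=f'(x_k)$ if $g(x_k,\delta_k)\le\eta_k$ and $h_k=g'(x_k,\delta_k)$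 otherwise; set $x_{k+1}=P_{x_k,\mathcal X}(\gamma_kh_k)$. For $1\le s\le N$ let $I=\{s,\dots,N\}$, $\mathcal B:=\{k\in I: g(x_k,\delta_k)\le\eta_k\}$, $\mathcal N:=I\setminus\mathcal B$. The cut-generation errors are $\varepsilon_k:=G(x_k)-g(x_k,\delta_k)\ge0$. Strong convexity assumption: $f$ is strongly convex with parameter $\mu_f>0$ (i.e. $f(x)\ge f(z)+\langle f'(z),x-z\rangle+\frac{\mu_f}{2}\|x-z\|^2$), each $g(\cdot,\delta)$ is strongly convex with parameter $\mu_g>0$ uniformly in $\delta$, and there is $L>0$ with $V(x,z)\le\frac L2\|x-z\|^2$ for all $x,z\in\mathcal X$. Define $a_k=\mu_f\gamma_k/L$ if $g(x_k,\delta_k)\le\eta_k$ and $a_k=\mu_g\gamma_k/L$ otherwise; $A_1=1$, $A_k=(1-a_k)A_{k-1}$ for $k\ge2$; $\rho_k=\gamma_k/A_k$. *)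

theory Defs
  imports "HOL-Analysis.Analysis"
begin

definition is_subgrad :: "('a::real_inner \<Rightarrow> real) \<Rightarrow> 'a set \<Rightarrow> 'a \<Rightarrow> 'a \<Rightarrow> bool" where
  "is_subgrad h X x v \<longleftrightarrow> (\<forall>z\<in>X. h z \<ge> h x + v \<bullet> (z - x))"

definition strongly_convex_on :: "real \<Rightarrow> 'a::real_normed_vector set \<Rightarrow> ('a \<Rightarrow> real) \<Rightarrow> bool" where
  "strongly_convex_on mu X h \<longleftrightarrow>
     (\<forall>x\<in>X. \<forall>y\<in>X. \<forall>t::real. 0 \<le> t \<and> t \<le> 1 \<longrightarrow>
        h ((1 - t) *\<^sub>R x + t *\<^sub>R y) \<le> (1 - t) * h x + t * h y - mu / 2 * t * (1 - t) * (norm (x - y))\<^sup>2)"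

definition bregman :: "('a::real_inner \<Rightarrow> real) \<Rightarrow> ('a \<Rightarrow> 'a) \<Rightarrow> 'a \<Rightarrow> 'a \<Rightarrow> real" where
  "bregman \<omega> d\<omega> x z = \<omega> z - \<omega> x - d\<omega> x \<bullet> (z - x)"

definition prox :: "('a::real_inner \<Rightarrow> real) \<Rightarrow> ('a \<Rightarrow> 'a) \<Rightarrow> 'a set \<Rightarrow> 'a \<Rightarrow> 'a \<Rightarrow> 'a" where
  "prox \<omega> d\<omega> X x y = arg_min_on (\<lambda>z. y \<bullet> z + bregman \<omega> d\<omega> x z) X"

definition DX :: "('a::real_inner \<Rightarrow> real) \<Rightarrow> ('a \<Rightarrow> 'a) \<Rightarrow> 'a set \<Rightarrow> real" where
  "DX \<omega> d\<omega> X = sqrt (SUP p\<in>X \<times> X. bregman \<omega> d\<omega> (fst p) (snd p))"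

definition Gmax :: "('a \<Rightarrow> 'b \<Rightarrow> real) \<Rightarrow> 'b set \<Rightarrow> 'a \<Rightarrow> real" where
  "Gmax g \<Delta> x = (SUP \<delta>\<in>\<Delta>. g x \<delta>)"

definition min_subset_sum :: "nat set \<Rightarrow> nat \<Rightarrow> (nat \<Rightarrow> real) \<Rightarrow> real" where
  "min_subset_sum I m w = Min {(\<Sum>k\<in>A. w k) | A. A \<subseteq> I \<and> card A = m}"

end

theory Submission
  imports Defs
begin

lemma dir_lim:
  fixes F :: "'a::real_inner \<Rightarrow> real"
  assumes X: "convex X" and x: "x \<in> X" and z: "z \<in> X"
    and der: "\<And>y. y \<in> X \<Longrightarrow> (F has_derivative (\<lambda>h. d y \<bullet> h)) (at y within X)"
  shows "((\<lambda>t. (F (x + t *\<^sub>R (z - x)) - F x) / t) \<longlongrightarrow> d x \<bullet> (z - x)) (at_right 0)"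
proof -
  have p: "((\<lambda>t::real. x + t *\<^sub>R (z - x)) has_derivative (\<lambda>t. t *\<^sub>R (z - x))) (at 0 within {0..1})"
    by (auto intro!: derivative_eq_intros)
  have img: "(\<lambda>t::real. x + t *\<^sub>R (z - x)) ` {0..1} \<subseteq> X"
  proof
    fix w assume "w \<in> (\<lambda>t::real. x + t *\<^sub>R (z - x)) ` {0..1}"
    then obtain t where t: "0 \<le> t" "t \<le> 1" "w = x + t *\<^sub>R (z - x)" by auto
    have "w = (1 - t) *\<^sub>R x + t *\<^sub>R z" using t by (simp add: algebra_simps)
    then show "w \<in> X" using X x z t by (simp add: convex_alt)
  qed
  have c: "((\<lambda>t. F (x + t *\<^sub>R (z - x))) has_derivative (\<lambda>y. d (x + 0 *\<^sub>R (z - x)) \<bullet> (y *\<^sub>R (z - x)))) (at 0 within {0..1})"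
    by (rule has_derivative_in_compose2[OF der img _ p]) auto
  have "((\<lambda>t. F (x + t *\<^sub>R (z - x))) has_field_derivative (d x \<bullet> (z - x))) (at 0 within {0..1})"
  proof -
    have e: "(\<lambda>y. y * (d x \<bullet> (z - x))) = (*) (d x \<bullet> (z - x))" by (rule ext) (simp add: mult.commute)
    show ?thesis unfolding has_field_derivative_def using c by (simp add: e)
  qed
  then have "((\<lambda>y. (F (x + y *\<^sub>R (z - x)) - F (x + 0 *\<^sub>R (z - x))) / (y - 0)) \<longlongrightarrow> d x \<bullet> (z - x)) (at 0 within {0..1})"
    by (simp only: has_field_derivative_iff)
  then show ?thesis by (simp add: at_within_Icc_at_right)
qed

lemma bregman_lb:
  fixes \<omega> :: "'a::real_inner \<Rightarrow> real"
  assumes X: "convex X" and x: "x \<in> X" and z: "z \<in> X"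
    and der: "\<And>y. y \<in> X \<Longrightarrow> (\<omega> has_derivative (\<lambda>h. d\<omega> y \<bullet> h)) (at y within X)"
    and sc: "strongly_convex_on 1 X \<omega>"
  shows "bregman \<omega> d\<omega> x z \<ge> 1/2 * (norm (z - x))\<^sup>2"
proof -
  have lim1: "((\<lambda>t. (\<omega> (x + t *\<^sub>R (z - x)) - \<omega> x) / t) \<longlongrightarrow> d\<omega> x \<bullet> (z - x)) (at_right 0)"
    by (rule dir_lim[OF X x z der])
  have lim2: "((\<lambda>t. \<omega> z - \<omega> x - 1/2 * (1 - t) * (norm (x - z))\<^sup>2) \<longlongrightarrow> \<omega> z - \<omega> x - 1/2 * (1 - 0) * (norm (x - z))\<^sup>2) (at_right 0)"
    by (intro tendsto_intros)
  have ev: "eventually (\<lambda>t. (\<omega> (x + t *\<^sub>R (z - x)) - \<omega> x) / t \<le> \<omega> z - \<omega> x - 1/2 * (1 - t) * (norm (x - z))\<^sup>2) (at_right (0::real))"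
    unfolding eventually_at_right_field
  proof (intro exI[of _ 1] conjI allI impI)
    show "(0::real) < 1" by simp
  next
    fix t :: real assume t0: "0 < t" and t1: "t < 1"
    note t = t0 t1
    have "\<omega> ((1 - t) *\<^sub>R x + t *\<^sub>R z) \<le> (1 - t) * \<omega> x + t * \<omega> z - 1 / 2 * t * (1 - t) * (norm (x - z))\<^sup>2"
      using sc x z t unfolding strongly_convex_on_def by auto
    moreover have "(1 - t) *\<^sub>R x + t *\<^sub>R z = x + t *\<^sub>R (z - x)" by (simp add: algebra_simps)
    ultimately have "\<omega> (x + t *\<^sub>R (z - x)) - \<omega> x \<le> t * (\<omega> z - \<omega> x - 1/2 * (1 - t) * (norm (x - z))\<^sup>2)"
      by (simp add: algebra_simps)
    then show "(\<omega> (x + t *\<^sub>R (z - x)) - \<omega> x) / t \<le> \<omega> z - \<omega> x - 1/2 * (1 - t) * (norm (x - z))\<^sup>2"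
      using t by (simp add: divide_le_eq mult.commute)
  qed
  have "d\<omega> x \<bullet> (z - x) \<le> \<omega> z - \<omega> x - 1/2 * (1 - 0) * (norm (x - z))\<^sup>2"
    by (rule tendsto_le[OF _ lim2 lim1 ev]) simp
  then show ?thesis unfolding bregman_def by (simp add: norm_minus_commute)
qed

lemma prox_props:
  fixes \<omega> :: "'a::real_inner \<Rightarrow> real"
  assumes X: "convex X" "compact X" and x: "x \<in> X"
    and der: "\<And>y. y \<in> X \<Longrightarrow> (\<omega> has_derivative (\<lambda>h. d\<omega> y \<bullet> h)) (at y within X)"
  shows "prox \<omega> d\<omega> X x y \<in> X"
    and "\<And>u. u \<in> X \<Longrightarrow> y \<bullet> (prox \<omega> d\<omega> X x y) + bregman \<omega> d\<omega> x (prox \<omega> d\<omega> X x y) \<le> y \<bullet> u + bregman \<omega> d\<omega> x u"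
proof -
  let ?\<phi> = "\<lambda>z. y \<bullet> z + bregman \<omega> d\<omega> x z"
  have cw: "continuous_on X \<omega>"
    unfolding continuous_on_eq_continuous_within
    using der has_derivative_continuous by blast
  have cphi: "continuous_on X ?\<phi>" unfolding bregman_def
    by (intro continuous_intros cw)
  obtain p where p: "p \<in> X" "\<And>u. u \<in> X \<Longrightarrow> ?\<phi> p \<le> ?\<phi> u"
    using continuous_attains_inf[OF X(2) _ cphi] x by blast
  have "is_arg_min ?\<phi> (\<lambda>z. z \<in> X) p" unfolding is_arg_min_def using p by (auto simp: not_less)
  then have "is_arg_min ?\<phi> (\<lambda>z. z \<in> X) (prox \<omega> d\<omega> X x y)"
    unfolding prox_def arg_min_on_def arg_min_def by (rule someI)
  then show "prox \<omega> d\<omega> X x y \<in> X" "\<And>u. u \<in> X \<Longrightarrow> ?\<phi> (prox \<omega> d\<omega> X x y) \<le> ?\<phi> u"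
    unfolding is_arg_min_def by (auto simp: not_less)
qed

lemma prox_vi:
  fixes \<omega> :: "'a::real_inner \<Rightarrow> real" and y :: 'a
  assumes X: "convex X" "compact X" and x: "x \<in> X" and u: "u \<in> X"
    and der: "\<And>y. y \<in> X \<Longrightarrow> (\<omega> has_derivative (\<lambda>h. d\<omega> y \<bullet> h)) (at y within X)"
  defines "p \<equiv> prox \<omega> d\<omega> X x y"
  shows "y \<bullet> (p - u) \<le> bregman \<omega> d\<omega> x u - bregman \<omega> d\<omega> p u - bregman \<omega> d\<omega> x p"
proof -
  have pX: "p \<in> X" unfolding p_def by (rule prox_props(1)[OF X x der])
  have opt: "\<And>w. w \<in> X \<Longrightarrow> y \<bullet> p + bregman \<omega> d\<omega> x p \<le> y \<bullet> w + bregman \<omega> d\<omega> x w"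
    unfolding p_def by (rule prox_props(2)[OF X x der])
  have lim1: "((\<lambda>t. (\<omega> (p + t *\<^sub>R (u - p)) - \<omega> p) / t) \<longlongrightarrow> d\<omega> p \<bullet> (u - p)) (at_right 0)"
    by (rule dir_lim[OF X(1) pX u der])
  have lim2: "((\<lambda>t. y \<bullet> (u - p) - d\<omega> x \<bullet> (u - p) + (\<omega> (p + t *\<^sub>R (u - p)) - \<omega> p) / t) \<longlongrightarrow>
      y \<bullet> (u - p) - d\<omega> x \<bullet> (u - p) + d\<omega> p \<bullet> (u - p)) (at_right 0)"
    by (intro tendsto_intros lim1)
  have ev: "eventually (\<lambda>t. 0 \<le> y \<bullet> (u - p) - d\<omega> x \<bullet> (u - p) + (\<omega> (p + t *\<^sub>R (u - p)) - \<omega> p) / t) (at_right (0::real))"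
    unfolding eventually_at_right_field
  proof (intro exI[of _ 1] conjI allI impI)
    show "(0::real) < 1" by simp
  next
    fix t :: real assume t0: "0 < t" and t1: "t < 1"
    have wX: "p + t *\<^sub>R (u - p) \<in> X"
    proof -
      have "p + t *\<^sub>R (u - p) = (1 - t) *\<^sub>R p + t *\<^sub>R u" by (simp add: algebra_simps)
      then show ?thesis using X(1) pX u t0 t1 by (simp add: convex_alt)
    qed
    have "y \<bullet> p + bregman \<omega> d\<omega> x p \<le> y \<bullet> (p + t *\<^sub>R (u - p)) + bregman \<omega> d\<omega> x (p + t *\<^sub>R (u - p))"
      by (rule opt[OF wX])
    then have "0 \<le> t * (y \<bullet> (u - p)) - t * (d\<omega> x \<bullet> (u - p)) + (\<omega> (p + t *\<^sub>R (u - p)) - \<omega> p)"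
      unfolding bregman_def by (simp add: inner_add_right inner_diff_right algebra_simps)
    moreover have "t * (y \<bullet> (u - p) - d\<omega> x \<bullet> (u - p) + (\<omega> (p + t *\<^sub>R (u - p)) - \<omega> p) / t)
       = t * (y \<bullet> (u - p)) - t * (d\<omega> x \<bullet> (u - p)) + (\<omega> (p + t *\<^sub>R (u - p)) - \<omega> p)"
      using t0 by (simp add: distrib_left right_diff_distrib del: times_divide_eq_right diff_divide_distrib) (metis less_irrefl mult.commute nonzero_eq_divide_eq)
    ultimately have "0 \<le> t * (y \<bullet> (u - p) - d\<omega> x \<bullet> (u - p) + (\<omega> (p + t *\<^sub>R (u - p)) - \<omega> p) / t)"
      by linarith
    then show "0 \<le> y \<bullet> (u - p) - d\<omega> x \<bullet> (u - p) + (\<omega> (p + t *\<^sub>R (u - p)) - \<omega> p) / t"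
      using t0 by (simp add: zero_le_mult_iff)
  qed
  have "0 \<le> y \<bullet> (u - p) - d\<omega> x \<bullet> (u - p) + d\<omega> p \<bullet> (u - p)"
    by (rule tendsto_lowerbound[OF lim2 ev]) simp
  then show ?thesis unfolding bregman_def
    by (simp add: inner_diff_right inner_diff_left algebra_simps)
qed

lemma prox_step:
  fixes \<omega> :: "'a::real_inner \<Rightarrow> real"
  assumes X: "convex X" "compact X" and x: "x \<in> X" and u: "u \<in> X"
    and der: "\<And>y. y \<in> X \<Longrightarrow> (\<omega> has_derivative (\<lambda>h. d\<omega> y \<bullet> h)) (at y within X)"
    and sc: "strongly_convex_on 1 X \<omega>"
  shows "y \<bullet> (x - u) \<le> bregman \<omega> d\<omega> x u - bregman \<omega> d\<omega> (prox \<omega> d\<omega> X x y) u + 1/2 * (norm y)\<^sup>2"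
proof -
  define p where "p = prox \<omega> d\<omega> X x y"
  have pX: "p \<in> X" unfolding p_def by (rule prox_props(1)[OF X x der])
  have vi: "y \<bullet> (p - u) \<le> bregman \<omega> d\<omega> x u - bregman \<omega> d\<omega> p u - bregman \<omega> d\<omega> x p"
    unfolding p_def by (rule prox_vi[OF X x u der])
  have lb: "bregman \<omega> d\<omega> x p \<ge> 1/2 * (norm (p - x))\<^sup>2" by (rule bregman_lb[OF X(1) x pX der sc])
  have cs: "y \<bullet> (x - p) \<le> norm y * norm (p - x)"
    using norm_cauchy_schwarz[of y "x - p"] by (simp add: norm_minus_commute)
  have amgm: "norm y * norm (p - x) \<le> 1/2 * (norm y)\<^sup>2 + 1/2 * (norm (p - x))\<^sup>2"
    using sum_squares_bound[of "norm y" "norm (p - x)"] by (simp add: algebra_simps power2_eq_square)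
  have "y \<bullet> (x - u) = y \<bullet> (x - p) + y \<bullet> (p - u)" by (simp add: inner_diff_right)
  with vi lb cs amgm show ?thesis unfolding p_def[symmetric] by linarith
qed

lemma telescope:
  fixes c e v :: "nat \<Rightarrow> real"
  assumes "s \<le> n" "\<And>k. s < k \<Longrightarrow> k \<le> n \<Longrightarrow> c k = e (k - 1)"
  shows "(\<Sum>k=s..n. c k * v k - e k * v (Suc k)) = c s * v s - e n * v (Suc n)"
  using assms
proof (induction n)
  case 0
  then show ?case by simp
next
  case (Suc n)
  show ?case
  proof (cases "s = Suc n")
    case True
    then show ?thesis by simp
  next
    case False
    then have sn: "s \<le> n" using Suc.prems by simp
    have IH: "(\<Sum>k=s..n. c k * v k - e k * v (Suc k)) = c s * v s - e n * v (Suc n)"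
      using Suc.IH[OF sn] Suc.prems(2) by simp
    have "c (Suc n) = e n" using Suc.prems(2)[of "Suc n"] sn by simp
    then show ?thesis using IH sn by simp
  qed
qed

lemma min_subset_finite: "finite I \<Longrightarrow> finite {(\<Sum>k\<in>A. w k) | A. A \<subseteq> I \<and> card A = m}"
proof -
  assume fI: "finite I"
  have "{(\<Sum>k\<in>A. w k) | A. A \<subseteq> I \<and> card A = m} \<subseteq> (\<lambda>A. \<Sum>k\<in>A. w k) ` Pow I" by auto
  then show ?thesis using fI by (meson finite_Pow_iff finite_imageI finite_subset)
qed

lemma min_subset_le:
  assumes "finite I" "A \<subseteq> I" "card A = m"
  shows "min_subset_sum I m w \<le> (\<Sum>k\<in>A. w k)"
  unfolding min_subset_sum_def using assms min_subset_finite[OF assms(1), of w m]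
  by (intro Min_le) auto

lemma min_subset_pos:
  assumes "finite I" "1 \<le> m" "m \<le> card I" "\<And>k. k \<in> I \<Longrightarrow> w k > 0"
  shows "min_subset_sum I m w > 0"
proof -
  obtain T where T: "T \<subseteq> I" "card T = m" "finite T" using obtain_subset_with_card_n[OF assms(3)] by blast
  have ne: "{(\<Sum>k\<in>A. w k) | A. A \<subseteq> I \<and> card A = m} \<noteq> {}" using T by auto
  have "min_subset_sum I m w \<in> {(\<Sum>k\<in>A. w k) | A. A \<subseteq> I \<and> card A = m}"
    unfolding min_subset_sum_def by (rule Min_in[OF min_subset_finite[OF assms(1)] ne])
  then obtain A where A: "A \<subseteq> I" "card A = m" "min_subset_sum I m w = (\<Sum>k\<in>A. w k)" by auto
  have "finite A" "A \<noteq> {}" using A assms(2) by (auto intro: card_ge_0_finite)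
  then have "(\<Sum>k\<in>A. w k) > 0" using A assms(4) by (intro sum_pos) auto
  then show ?thesis using A by simp
qed

theorem mainTheorem20:
  fixes X :: "'a::euclidean_space set" and \<Delta> :: "'b::euclidean_space set"
    and f :: "'a \<Rightarrow> real" and g :: "'a \<Rightarrow> 'b \<Rightarrow> real"
    and f' :: "'a \<Rightarrow> 'a" and g' :: "'a \<Rightarrow> 'b \<Rightarrow> 'a"
    and Lf LgX LgD :: real
    and \<omega> :: "'a \<Rightarrow> real" and d\<omega> :: "'a \<Rightarrow> 'a"
    and xstar :: 'a
    and N s :: nat and x :: "nat \<Rightarrow> 'a" and \<delta> :: "nat \<Rightarrow> 'b"
    and \<eta> \<gamma> :: "nat \<Rightarrow> real"
    and \<mu>f \<mu>g L :: real
  defines "G \<equiv> Gmax g \<Delta>"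
    and "V \<equiv> bregman \<omega> d\<omega>"
    and "D \<equiv> DX \<omega> d\<omega> X"
    and "I \<equiv> {s..N}"
    and "B \<equiv> {k \<in> {s..N}. g (x k) (\<delta> k) \<le> \<eta> k}"
    and "NN \<equiv> {s..N} - {k \<in> {s..N}. g (x k) (\<delta> k) \<le> \<eta> k}"
    and "a \<equiv> (\<lambda>k. if g (x k) (\<delta> k) \<le> \<eta> k then \<mu>f * \<gamma> k / L else \<mu>g * \<gamma> k / L)"
  defines "A \<equiv> (\<lambda>k. \<Prod>j\<in>{2..k}. (1 - a j))"
  defines "\<rho> \<equiv> (\<lambda>k. \<gamma> k / A k)"
    and "\<epsilon> \<equiv> (\<lambda>k. G (x k) - g (x k) (\<delta> k))"
    and "m \<equiv> nat \<lceil>real (N - s + 1) / 2\<rceil>"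
  assumes X_convex: "convex X" and X_compact: "compact X"
    and f_convex: "convex_on X f" and f_lip: "Lf-lipschitz_on X f"
    and D_compact: "compact \<Delta>"
    and g_convex: "\<And>d. d \<in> \<Delta> \<Longrightarrow> convex_on X (\<lambda>y. g y d)"
    and g_lipX: "\<And>d. d \<in> \<Delta> \<Longrightarrow> LgX-lipschitz_on X (\<lambda>y. g y d)"
    and g_lipD: "\<And>y. y \<in> X \<Longrightarrow> LgD-lipschitz_on \<Delta> (\<lambda>d. g y d)"
    and f'_sub: "\<And>y. y \<in> X \<Longrightarrow> is_subgrad f X y (f' y)"
    and g'_sub: "\<And>y d. y \<in> X \<Longrightarrow> d \<in> \<Delta> \<Longrightarrow> is_subgrad (\<lambda>z. g z d) X y (g' y d)"
    and f'_bound: "\<And>y. y \<in> X \<Longrightarrow> norm (f' y) \<le> Lf"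
    and g'_bound: "\<And>y d. y \<in> X \<Longrightarrow> d \<in> \<Delta> \<Longrightarrow> norm (g' y d) \<le> LgX"
    and xstar_opt: "xstar \<in> X" "G xstar \<le> 0" "\<And>y. y \<in> X \<Longrightarrow> G y \<le> 0 \<Longrightarrow> f xstar \<le> f y"
    and \<omega>_deriv: "\<And>y. y \<in> X \<Longrightarrow> (\<omega> has_derivative (\<lambda>h. d\<omega> y \<bullet> h)) (at y within X)"
    and \<omega>_C1: "continuous_on X d\<omega>"
    and \<omega>_sc: "strongly_convex_on 1 X \<omega>"
    and \<mu>f_pos: "\<mu>f > 0" and \<mu>g_pos: "\<mu>g > 0" and L_pos: "L > 0"
    and f_sc: "\<And>y z. y \<in> X \<Longrightarrow> z \<in> X \<Longrightarrow>
                 f y \<ge> f z + f' z \<bullet> (y - z) + \<mu>f / 2 * (norm (y - z))\<^sup>2"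
    and g_sc: "\<And>y z d. y \<in> X \<Longrightarrow> z \<in> X \<Longrightarrow> d \<in> \<Delta> \<Longrightarrow>
                 g y d \<ge> g z d + g' z d \<bullet> (y - z) + \<mu>g / 2 * (norm (y - z))\<^sup>2"
    and V_bound: "\<And>y z. y \<in> X \<Longrightarrow> z \<in> X \<Longrightarrow> V y z \<le> L / 2 * (norm (y - z))\<^sup>2"
    and N_pos: "1 \<le> N" and s_range: "1 \<le> s" "s \<le> N"
    and x1: "x 1 \<in> X"
    and \<delta>_in: "\<And>k. k \<in> {1..N} \<Longrightarrow> \<delta> k \<in> \<Delta>"
    and \<eta>_pos: "\<And>k. k \<in> {1..N} \<Longrightarrow> \<eta> k > 0"
    and \<gamma>_pos: "\<And>k. k \<in> {1..N} \<Longrightarrow> \<gamma> k > 0"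
    and step: "\<And>k. k \<in> {1..N} \<Longrightarrow>
       x (Suc k) = prox \<omega> d\<omega> X (x k)
         (\<gamma> k *\<^sub>R (if g (x k) (\<delta> k) \<le> \<eta> k then f' (x k) else g' (x k) (\<delta> k)))"
    and a_range: "\<And>k. k \<in> {1..N} \<Longrightarrow> 0 < a k \<and> a k \<le> 1"
    and A_pos: "\<And>k. k \<in> {1..N} \<Longrightarrow> A k > 0"
    and hyp: "min_subset_sum I m (\<lambda>k. \<rho> k * \<eta> k) >
       (1 - a s) * D\<^sup>2 / A s + 1/2 * (\<Sum>k\<in>B. \<rho> k * \<gamma> k * Lf\<^sup>2)
         + 1/2 * (\<Sum>k\<in>NN. \<rho> k * \<gamma> k * LgX\<^sup>2)"
  shows "(f ((1 / (\<Sum>k\<in>B. \<rho> k)) *\<^sub>R (\<Sum>k\<in>B. \<rho> k *\<^sub>R x k)) - f xstar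
           \<le> (2 * (1 - a s) * D\<^sup>2 / A s + (\<Sum>k\<in>B. \<rho> k * \<gamma> k * Lf\<^sup>2)
                + (\<Sum>k\<in>NN. \<rho> k * \<gamma> k * LgX\<^sup>2))
             / (2 * min_subset_sum I m \<rho>))
         \<and> (G ((1 / (\<Sum>k\<in>B. \<rho> k)) *\<^sub>R (\<Sum>k\<in>B. \<rho> k *\<^sub>R x k))
           \<le> (\<Sum>k\<in>B. \<rho> k * (\<eta> k + \<epsilon> k)) / (\<Sum>k\<in>B. \<rho> k))"
proof -
  have IN: "I \<subseteq> {1..N}" unfolding I_def using s_range by auto
  have finI: "finite I" unfolding I_def by simp
  have BI: "B \<subseteq> I" unfolding B_def I_def by auto
  have NNI: "NN = I - B" unfolding NN_def B_def I_def by simp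
  have finB: "finite B" using BI finI finite_subset by blast
  have finNN: "finite NN" using NNI finI by simp
  have xX: "\<And>k. 1 \<le> k \<Longrightarrow> k \<le> Suc N \<Longrightarrow> x k \<in> X"
  proof -
    fix k :: nat
    show "1 \<le> k \<Longrightarrow> k \<le> Suc N \<Longrightarrow> x k \<in> X"
    proof (induction k)
      case 0 then show ?case by simp
    next
      case (Suc k)
      show ?case
      proof (cases "k = 0")
        case True then show ?thesis using x1 by simp
      next
        case False
        then have k: "k \<in> {1..N}" using Suc.prems by auto
        have "x k \<in> X" using Suc.IH False Suc.prems by simp
        then show ?thesis unfolding step[OF k] by (rule prox_props(1)[OF X_convex X_compact _ \<omega>_deriv])
      qed
    qed
  qed
  have Dne: "\<Delta> \<noteq> {}" using \<delta>_in[of 1] N_pos by auto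
  have bddg: "\<And>y. y \<in> X \<Longrightarrow> bdd_above ((\<lambda>d. g y d) ` \<Delta>)"
  proof -
    fix y assume y: "y \<in> X"
    have "continuous_on \<Delta> (\<lambda>d. g y d)" using g_lipD[OF y] by (rule lipschitz_on_continuous_on)
    then have "compact ((\<lambda>d. g y d) ` \<Delta>)" using D_compact by (rule compact_continuous_image)
    then show "bdd_above ((\<lambda>d. g y d) ` \<Delta>)" by (intro bounded_imp_bdd_above compact_imp_bounded)
  qed
  have gG: "\<And>y d. y \<in> X \<Longrightarrow> d \<in> \<Delta> \<Longrightarrow> g y d \<le> G y"
    unfolding G_def Gmax_def using bddg by (intro cSUP_upper) auto
  have gstar: "\<And>d. d \<in> \<Delta> \<Longrightarrow> g xstar d \<le> 0" using gG[OF xstar_opt(1)] xstar_opt(2) by force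
  have \<rho>pos: "\<And>k. k \<in> {1..N} \<Longrightarrow> \<rho> k > 0" unfolding \<rho>_def using \<gamma>_pos A_pos by simp
  obtain R where R: "\<And>y. y \<in> X \<Longrightarrow> norm y \<le> R" using compact_imp_bounded[OF X_compact] unfolding bounded_iff by blast
  have Vbdd: "\<And>y z. y \<in> X \<Longrightarrow> z \<in> X \<Longrightarrow> V y z \<le> L / 2 * (2 * R)\<^sup>2"
  proof -
    fix y z assume y: "y \<in> X" and z: "z \<in> X"
    have "norm (y - z) \<le> 2 * R" using R[OF y] R[OF z] norm_triangle_ineq4[of y z] by linarith
    then have "(norm (y - z))\<^sup>2 \<le> (2 * R)\<^sup>2" by (intro power_mono) auto
    then have "L / 2 * (norm (y - z))\<^sup>2 \<le> L / 2 * (2 * R)\<^sup>2" using L_pos by simp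
    then show "V y z \<le> L / 2 * (2 * R)\<^sup>2" using V_bound[OF y z] by linarith
  qed
  have bddV: "bdd_above ((\<lambda>p. bregman \<omega> d\<omega> (fst p) (snd p)) ` (X \<times> X))"
    by (rule bdd_aboveI2[where M = "L / 2 * (2 * R)\<^sup>2"]) (use Vbdd in \<open>auto simp: V_def\<close>)
  have VleS: "\<And>y z. y \<in> X \<Longrightarrow> z \<in> X \<Longrightarrow> V y z \<le> (SUP p\<in>X \<times> X. bregman \<omega> d\<omega> (fst p) (snd p))"
  proof -
    fix y z assume "y \<in> X" "z \<in> X"
    then have "(y, z) \<in> X \<times> X" by simp
    from cSUP_upper[OF this bddV] show "V y z \<le> (SUP p\<in>X \<times> X. bregman \<omega> d\<omega> (fst p) (snd p))"
      by (simp add: V_def)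
  qed
  have S0: "0 \<le> (SUP p\<in>X \<times> X. bregman \<omega> d\<omega> (fst p) (snd p))"
    using VleS[OF x1 x1] by (simp add: V_def bregman_def)
  have D2: "D\<^sup>2 = (SUP p\<in>X \<times> X. bregman \<omega> d\<omega> (fst p) (snd p))"
    unfolding D_def DX_def using S0 by simp
  have VleD: "\<And>y z. y \<in> X \<Longrightarrow> z \<in> X \<Longrightarrow> V y z \<le> D\<^sup>2" using VleS D2 by simp
  have V0: "\<And>y z. y \<in> X \<Longrightarrow> z \<in> X \<Longrightarrow> 0 \<le> V y z"
  proof -
    fix y z assume "y \<in> X" "z \<in> X"
    from bregman_lb[OF X_convex this \<omega>_deriv \<omega>_sc] have "1/2 * (norm (z - y))\<^sup>2 \<le> V y z"
      unfolding V_def .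
    moreover have "0 \<le> 1/2 * (norm (z - y))\<^sup>2" by simp
    ultimately show "0 \<le> V y z" by linarith
  qed
  define T where "T = (\<lambda>k. if g (x k) (\<delta> k) \<le> \<eta> k then f (x k) - f xstar else g (x k) (\<delta> k) - g xstar (\<delta> k))"
  define M where "M = (\<lambda>k. if g (x k) (\<delta> k) \<le> \<eta> k then Lf\<^sup>2 else LgX\<^sup>2)"
  have stepk: "\<And>k. k \<in> {1..N} \<Longrightarrow> \<gamma> k * T k \<le> (1 - a k) * V (x k) xstar - V (x (Suc k)) xstar + 1/2 * \<gamma> k ^ 2 * M k"
  proof -
    fix k assume k: "k \<in> {1..N}"
    define h where "h = (if g (x k) (\<delta> k) \<le> \<eta> k then f' (x k) else g' (x k) (\<delta> k))"
    have xk: "x k \<in> X" using xX k by auto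
    have xs: "xstar \<in> X" by (rule xstar_opt(1))
    have dk: "\<delta> k \<in> \<Delta>" using \<delta>_in k by simp
    have gk: "\<gamma> k > 0" using \<gamma>_pos k by simp
    have ps: "(\<gamma> k *\<^sub>R h) \<bullet> (x k - xstar) \<le> V (x k) xstar - V (x (Suc k)) xstar + 1/2 * (norm (\<gamma> k *\<^sub>R h))\<^sup>2"
      using prox_step[OF X_convex X_compact xk xs \<omega>_deriv \<omega>_sc, of "\<gamma> k *\<^sub>R h"] step[OF k]
      unfolding V_def h_def by simp
    have nh: "(norm h)\<^sup>2 \<le> M k"
      unfolding M_def h_def using f'_bound[OF xk] g'_bound[OF xk dk]
      by (auto intro!: power_mono)
    have ngh: "1/2 * (norm (\<gamma> k *\<^sub>R h))\<^sup>2 \<le> 1/2 * \<gamma> k ^ 2 * M k"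
    proof -
      have "(norm (\<gamma> k *\<^sub>R h))\<^sup>2 = \<gamma> k ^ 2 * (norm h)\<^sup>2" using gk by (simp add: power_mult_distrib)
      also have "\<dots> \<le> \<gamma> k ^ 2 * M k" using nh by (intro mult_left_mono) auto
      finally show ?thesis by simp
    qed
    have ip: "(\<gamma> k *\<^sub>R h) \<bullet> (x k - xstar) = - (\<gamma> k * (h \<bullet> (xstar - x k)))"
      by (simp add: inner_diff_right algebra_simps)
    have Vb: "V (x k) xstar \<le> L / 2 * (norm (xstar - x k))\<^sup>2"
      using V_bound[OF xk xs] by (simp add: norm_minus_commute)
    show "\<gamma> k * T k \<le> (1 - a k) * V (x k) xstar - V (x (Suc k)) xstar + 1/2 * \<gamma> k ^ 2 * M k"
    proof (cases "g (x k) (\<delta> k) \<le> \<eta> k")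
      case True
      have fs: "f xstar \<ge> f (x k) + h \<bullet> (xstar - x k) + \<mu>f / 2 * (norm (xstar - x k))\<^sup>2"
        using f_sc[OF xs xk] True unfolding h_def by simp
      have a1: "\<mu>f * \<gamma> k / L * V (x k) xstar \<le> \<mu>f * \<gamma> k / L * (L / 2 * (norm (xstar - x k))\<^sup>2)"
        using Vb \<mu>f_pos gk L_pos by (intro mult_left_mono) auto
      have a2: "\<mu>f * \<gamma> k / L * (L / 2 * (norm (xstar - x k))\<^sup>2) = \<gamma> k * (\<mu>f / 2 * (norm (xstar - x k))\<^sup>2)"
        using L_pos by (simp add: field_simps)
      have a3: "\<gamma> k * (f (x k) + h \<bullet> (xstar - x k) + \<mu>f / 2 * (norm (xstar - x k))\<^sup>2) \<le> \<gamma> k * f xstar"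
        using fs gk by (intro mult_left_mono) auto
      have ak: "a k = \<mu>f * \<gamma> k / L" unfolding a_def using True by simp
      have Tk: "T k = f (x k) - f xstar" unfolding T_def using True by simp
      have e1: "(1 - \<mu>f * \<gamma> k / L) * V (x k) xstar = V (x k) xstar - \<mu>f * \<gamma> k / L * V (x k) xstar"
        by (simp add: algebra_simps)
      have e2: "\<gamma> k * (f (x k) + h \<bullet> (xstar - x k) + \<mu>f / 2 * (norm (xstar - x k))\<^sup>2)
         = \<gamma> k * f (x k) + \<gamma> k * (h \<bullet> (xstar - x k)) + \<gamma> k * (\<mu>f / 2 * (norm (xstar - x k))\<^sup>2)"
        by (simp add: algebra_simps)
      have e3: "\<gamma> k * (f (x k) - f xstar) = \<gamma> k * f (x k) - \<gamma> k * f xstar" by (simp add: algebra_simps)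
      show ?thesis unfolding ak Tk e1 e3 using a1 a2 a3 ps ngh ip e2 by linarith
    next
      case False
      have fs: "g xstar (\<delta> k) \<ge> g (x k) (\<delta> k) + h \<bullet> (xstar - x k) + \<mu>g / 2 * (norm (xstar - x k))\<^sup>2"
        using g_sc[OF xs xk dk] False unfolding h_def by simp
      have a1: "\<mu>g * \<gamma> k / L * V (x k) xstar \<le> \<mu>g * \<gamma> k / L * (L / 2 * (norm (xstar - x k))\<^sup>2)"
        using Vb \<mu>g_pos gk L_pos by (intro mult_left_mono) auto
      have a2: "\<mu>g * \<gamma> k / L * (L / 2 * (norm (xstar - x k))\<^sup>2) = \<gamma> k * (\<mu>g / 2 * (norm (xstar - x k))\<^sup>2)"
        using L_pos by (simp add: field_simps)
      have a3: "\<gamma> k * (g (x k) (\<delta> k) + h \<bullet> (xstar - x k) + \<mu>g / 2 * (norm (xstar - x k))\<^sup>2) \<le> \<gamma> k * g xstar (\<delta> k)"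
        using fs gk by (intro mult_left_mono) auto
      have ak: "a k = \<mu>g * \<gamma> k / L" unfolding a_def using False by simp
      have Tk: "T k = g (x k) (\<delta> k) - g xstar (\<delta> k)" unfolding T_def using False by simp
      have e1: "(1 - \<mu>g * \<gamma> k / L) * V (x k) xstar = V (x k) xstar - \<mu>g * \<gamma> k / L * V (x k) xstar"
        by (simp add: algebra_simps)
      have e2: "\<gamma> k * (g (x k) (\<delta> k) + h \<bullet> (xstar - x k) + \<mu>g / 2 * (norm (xstar - x k))\<^sup>2)
         = \<gamma> k * g (x k) (\<delta> k) + \<gamma> k * (h \<bullet> (xstar - x k)) + \<gamma> k * (\<mu>g / 2 * (norm (xstar - x k))\<^sup>2)"
        by (simp add: algebra_simps)
      have e3: "\<gamma> k * (g (x k) (\<delta> k) - g xstar (\<delta> k)) = \<gamma> k * g (x k) (\<delta> k) - \<gamma> k * g xstar (\<delta> k)" by (simp add: algebra_simps)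
      show ?thesis unfolding ak Tk e1 e3 using a1 a2 a3 ps ngh ip e2 by linarith
    qed
  qed
  have Apos: "\<And>k. k \<in> {1..N} \<Longrightarrow> A k > 0" by (rule A_pos)
  have Arec: "\<And>k. 2 \<le> k \<Longrightarrow> A k = A (k - 1) * (1 - a k)"
  proof -
    fix k :: nat assume k: "2 \<le> k"
    then obtain j where j: "k = Suc j" "1 \<le> j" by (cases k) auto
    show "A k = A (k - 1) * (1 - a k)" unfolding A_def j using j(2) by simp
  qed
  define VV where "VV = (\<lambda>k. V (x k) xstar)"
  define c where "c = (\<lambda>k. (1 - a k) / A k)"
  define e where "e = (\<lambda>k. 1 / A k)"
  have stepA: "\<And>k. k \<in> I \<Longrightarrow> \<rho> k * T k \<le> (c k * VV k - e k * VV (Suc k)) + 1/2 * (\<rho> k * \<gamma> k * M k)"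
  proof -
    fix k assume kI: "k \<in> I"
    then have k: "k \<in> {1..N}" using IN by auto
    have Ak: "A k > 0" using Apos[OF k] .
    have "\<gamma> k * T k / A k \<le> ((1 - a k) * V (x k) xstar - V (x (Suc k)) xstar + 1/2 * \<gamma> k ^ 2 * M k) / A k"
      using stepk[OF k] Ak by (intro divide_right_mono) auto
    moreover have "\<gamma> k * T k / A k = \<rho> k * T k" unfolding \<rho>_def by simp
    moreover have "((1 - a k) * V (x k) xstar - V (x (Suc k)) xstar + 1/2 * \<gamma> k ^ 2 * M k) / A k
       = (c k * VV k - e k * VV (Suc k)) + 1/2 * (\<rho> k * \<gamma> k * M k)"
      unfolding c_def e_def VV_def \<rho>_def using Ak by (simp add: field_simps power2_eq_square)
    ultimately show "\<rho> k * T k \<le> (c k * VV k - e k * VV (Suc k)) + 1/2 * (\<rho> k * \<gamma> k * M k)" by simp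
  qed
  have tel: "(\<Sum>k\<in>I. c k * VV k - e k * VV (Suc k)) = c s * VV s - e N * VV (Suc N)"
    unfolding I_def
  proof (rule telescope[OF s_range(2)])
    fix k assume k: "s < k" "k \<le> N"
    then have k2: "2 \<le> k" using s_range by simp
    have Ak: "A k > 0" using Apos k s_range by simp
    have "k - 1 \<in> {1..N}" using k s_range by auto
    then have Ak1: "A (k - 1) > 0" by (rule Apos)
    have ne: "1 - a k \<noteq> 0" using Ak Arec[OF k2] by auto
    show "c k = e (k - 1)" unfolding c_def e_def Arec[OF k2] using ne Ak1 by simp
  qed
  have sumI: "(\<Sum>k\<in>I. \<rho> k * T k) \<le> c s * VV s - e N * VV (Suc N) + (\<Sum>k\<in>I. 1/2 * (\<rho> k * \<gamma> k * M k))"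
  proof -
    have "(\<Sum>k\<in>I. \<rho> k * T k) \<le> (\<Sum>k\<in>I. (c k * VV k - e k * VV (Suc k)) + 1/2 * (\<rho> k * \<gamma> k * M k))"
      by (rule sum_mono) (rule stepA)
    also have "\<dots> = (\<Sum>k\<in>I. c k * VV k - e k * VV (Suc k)) + (\<Sum>k\<in>I. 1/2 * (\<rho> k * \<gamma> k * M k))"
      by (rule sum.distrib)
    finally show ?thesis unfolding tel .
  qed
  have sIN: "s \<in> {1..N}" using s_range by simp
  have cs: "c s * VV s \<le> (1 - a s) * D\<^sup>2 / A s"
  proof -
    have "0 \<le> (1 - a s) / A s" using a_range[OF sIN] Apos[OF sIN] by simp
    moreover have "VV s \<le> D\<^sup>2" unfolding VV_def using VleD xX[of s] s_range xstar_opt(1) by simp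
    ultimately have "(1 - a s) / A s * VV s \<le> (1 - a s) / A s * D\<^sup>2" by (intro mult_left_mono)
    then show ?thesis unfolding c_def by simp
  qed
  have eN: "0 \<le> e N * VV (Suc N)"
    unfolding e_def VV_def using Apos[of N] N_pos V0[OF xX[of "Suc N"] xstar_opt(1)] by simp
  have splitI: "\<And>F. (\<Sum>k\<in>I. F k) = (\<Sum>k\<in>B. F k) + (\<Sum>k\<in>NN. F k)"
    unfolding NNI using sum.subset_diff[OF BI finI] by (simp add: add.commute)
  have PB: "\<And>k. k \<in> B \<Longrightarrow> g (x k) (\<delta> k) \<le> \<eta> k" unfolding B_def by simp
  have PNN: "\<And>k. k \<in> NN \<Longrightarrow> \<not> g (x k) (\<delta> k) \<le> \<eta> k" unfolding NN_def by simp
  define SB where "SB = (\<Sum>k\<in>B. \<rho> k * (f (x k) - f xstar))"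
  define Rr where "Rr = (1 - a s) * D\<^sup>2 / A s + 1/2 * (\<Sum>k\<in>B. \<rho> k * \<gamma> k * Lf\<^sup>2) + 1/2 * (\<Sum>k\<in>NN. \<rho> k * \<gamma> k * LgX\<^sup>2)"
  have TB: "(\<Sum>k\<in>B. \<rho> k * T k) = SB" unfolding SB_def T_def by (rule sum.cong) (auto dest: PB)
  have MB: "(\<Sum>k\<in>B. 1/2 * (\<rho> k * \<gamma> k * M k)) = 1/2 * (\<Sum>k\<in>B. \<rho> k * \<gamma> k * Lf\<^sup>2)"
    unfolding sum_distrib_left M_def by (rule sum.cong) (auto dest: PB)
  have MNN: "(\<Sum>k\<in>NN. 1/2 * (\<rho> k * \<gamma> k * M k)) = 1/2 * (\<Sum>k\<in>NN. \<rho> k * \<gamma> k * LgX\<^sup>2)"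
    unfolding sum_distrib_left M_def by (rule sum.cong) (auto dest: PNN)
  have TNN: "(\<Sum>k\<in>NN. \<rho> k * \<eta> k) \<le> (\<Sum>k\<in>NN. \<rho> k * T k)"
  proof (rule sum_mono)
    fix k assume kN: "k \<in> NN"
    then have k: "k \<in> {1..N}" using NNI IN by auto
    have "T k = g (x k) (\<delta> k) - g xstar (\<delta> k)" unfolding T_def using PNN[OF kN] by simp
    moreover have "g xstar (\<delta> k) \<le> 0" using gstar \<delta>_in[OF k] by simp
    ultimately have "\<eta> k \<le> T k" using PNN[OF kN] by simp
    then show "\<rho> k * \<eta> k \<le> \<rho> k * T k" using \<rho>pos[OF k] by (intro mult_left_mono) auto
  qed
  have key: "SB + (\<Sum>k\<in>NN. \<rho> k * \<eta> k) \<le> Rr"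
    using sumI splitI[of "\<lambda>k. \<rho> k * T k"] splitI[of "\<lambda>k. 1/2 * (\<rho> k * \<gamma> k * M k)"] TB MB MNN TNN cs eN
    unfolding Rr_def by linarith
  have cardI: "card I = N - s + 1" unfolding I_def using s_range by simp
  have mf: "1 \<le> m \<and> m \<le> card I \<and> card I \<le> 2 * m \<and> 2 * m \<le> card I + 1"
  proof -
    define n where "n = N - s + 1"
    have n1: "1 \<le> n" unfolding n_def by simp
    define z where "z = \<lceil>real n / 2\<rceil>"
    have z1: "real_of_int z - 1 < real n / 2" "real n / 2 \<le> real_of_int z"
      using ceiling_correct[of "real n / 2"] unfolding z_def by auto
    have zpos: "0 \<le> z" using z1(2) n1 by (simp add: zero_le_ceiling z_def)
    have mz: "real m = real_of_int z" unfolding m_def z_def n_def[symmetric] using zpos z_def by simp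
    have r1: "real n \<le> real (2 * m)" using z1 mz by simp
    have r2: "real (2 * m) < real (n + 2)" using z1 mz by simp
    have i1: "n \<le> 2 * m" using r1 by (simp only: of_nat_le_iff)
    have i2: "2 * m < n + 2" using r2 by (simp only: of_nat_less_iff)
    show ?thesis using i1 i2 n1 cardI unfolding n_def[symmetric] by auto
  qed
  have m1: "1 \<le> m" and mle: "m \<le> card I" using mf by auto
  define m0 where "m0 = min_subset_sum I m \<rho>"
  have m0pos: "m0 > 0" unfolding m0_def
    by (rule min_subset_pos[OF finI m1 mle]) (use \<rho>pos IN in auto)
  have hyp': "min_subset_sum I m (\<lambda>k. \<rho> k * \<eta> k) > Rr" using hyp unfolding Rr_def .
  have alt: "SB < 0 \<or> m \<le> card B"
  proof (cases "m \<le> card B")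
    case True then show ?thesis by simp
  next
    case False
    have "card NN = card I - card B" unfolding NNI using card_Diff_subset[OF finB BI] .
    then have "m \<le> card NN" using False mf by linarith
    then obtain A0 where A0: "A0 \<subseteq> NN" "card A0 = m" "finite A0"
      using obtain_subset_with_card_n by blast
    have "min_subset_sum I m (\<lambda>k. \<rho> k * \<eta> k) \<le> (\<Sum>k\<in>A0. \<rho> k * \<eta> k)"
      using A0 NNI by (intro min_subset_le[OF finI]) auto
    also have "\<dots> \<le> (\<Sum>k\<in>NN. \<rho> k * \<eta> k)"
    proof (rule sum_mono2[OF finNN A0(1)])
      fix k assume "k \<in> NN - A0"
      then have k: "k \<in> {1..N}" using NNI IN by auto
      show "0 \<le> \<rho> k * \<eta> k" using \<rho>pos[OF k] \<eta>_pos[OF k] by simp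
    qed
    finally show ?thesis using key hyp' by linarith
  qed
  have BN: "\<And>k. k \<in> B \<Longrightarrow> k \<in> {1..N}" using BI IN by auto
  have Bne: "B \<noteq> {}"
  proof
    assume "B = {}"
    then have "SB = 0" "card B = 0" unfolding SB_def by auto
    then show False using alt m1 by linarith
  qed
  define W where "W = (\<Sum>k\<in>B. \<rho> k)"
  have Wpos: "W > 0" unfolding W_def using finB Bne \<rho>pos BN by (intro sum_pos) auto
  have xbar: "(1 / (\<Sum>k\<in>B. \<rho> k)) *\<^sub>R (\<Sum>k\<in>B. \<rho> k *\<^sub>R x k) = (\<Sum>k\<in>B. (\<rho> k / W) *\<^sub>R x k)"
    unfolding W_def[symmetric] scaleR_sum_right by (simp add: divide_inverse mult.commute)
  have wsum: "(\<Sum>k\<in>B. \<rho> k / W) = 1" using Wpos unfolding sum_divide_distrib[symmetric] W_def by simp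
  have wpos: "\<And>k. k \<in> B \<Longrightarrow> 0 \<le> \<rho> k / W" using \<rho>pos BN Wpos by (simp add: less_imp_le)
  have xBX: "\<And>k. k \<in> B \<Longrightarrow> x k \<in> X"
  proof -
    fix k assume "k \<in> B"
    then have "1 \<le> k" "k \<le> Suc N" using BN[of k] by auto
    then show "x k \<in> X" by (rule xX)
  qed
  have fbar: "f (\<Sum>k\<in>B. (\<rho> k / W) *\<^sub>R x k) \<le> (\<Sum>k\<in>B. \<rho> k / W * f (x k))"
    by (rule convex_on_sum[OF finB Bne f_convex wsum wpos xBX])
  have SBW: "SB / W = (\<Sum>k\<in>B. \<rho> k / W * f (x k)) - f xstar"
  proof -
    have "SB = (\<Sum>k\<in>B. \<rho> k * f (x k)) - W * f xstar"
      unfolding SB_def W_def by (simp add: right_diff_distrib sum_subtractf sum_distrib_right)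
    then show ?thesis using Wpos by (simp add: sum_divide_distrib[symmetric] field_simps)
  qed
  have Rr0: "0 \<le> Rr"
  proof -
    have "0 \<le> (1 - a s) * D\<^sup>2 / A s" using a_range[OF sIN] Apos[OF sIN] by simp
    moreover have "0 \<le> (\<Sum>k\<in>B. \<rho> k * \<gamma> k * Lf\<^sup>2)"
      using \<rho>pos \<gamma>_pos BN by (intro sum_nonneg) (simp add: less_imp_le)
    moreover have "0 \<le> (\<Sum>k\<in>NN. \<rho> k * \<gamma> k * LgX\<^sup>2)"
      using \<rho>pos \<gamma>_pos NNI IN by (intro sum_nonneg) (auto simp: less_imp_le)
    ultimately show ?thesis unfolding Rr_def by simp
  qed
  have NNeta: "0 \<le> (\<Sum>k\<in>NN. \<rho> k * \<eta> k)"
    using \<rho>pos \<eta>_pos NNI IN by (intro sum_nonneg) (auto simp: less_imp_le)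
  have SBb: "SB / W \<le> Rr / m0"
  proof (cases "SB \<le> 0")
    case True
    then have "SB / W \<le> 0" using Wpos by (simp add: divide_nonpos_pos)
    also have "0 \<le> Rr / m0" using Rr0 m0pos by simp
    finally show ?thesis .
  next
    case False
    then have mB: "m \<le> card B" using alt by simp
    then obtain A0 where A0: "A0 \<subseteq> B" "card A0 = m" "finite A0"
      using obtain_subset_with_card_n by blast
    have "m0 \<le> (\<Sum>k\<in>A0. \<rho> k)" unfolding m0_def using A0 BI by (intro min_subset_le[OF finI]) auto
    also have "\<dots> \<le> W" unfolding W_def
      using \<rho>pos BN by (intro sum_mono2[OF finB A0(1)]) (auto simp: less_imp_le)
    finally have m0W: "m0 \<le> W" .
    have "SB / W \<le> SB / m0" using False m0pos m0W by (intro divide_left_mono) auto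
    also have "\<dots> \<le> Rr / m0" using key NNeta m0pos by (intro divide_right_mono) auto
    finally show ?thesis .
  qed
  have rhs1: "(2 * (1 - a s) * D\<^sup>2 / A s + (\<Sum>k\<in>B. \<rho> k * \<gamma> k * Lf\<^sup>2)
                + (\<Sum>k\<in>NN. \<rho> k * \<gamma> k * LgX\<^sup>2)) / (2 * min_subset_sum I m \<rho>) = Rr / m0"
    unfolding m0_def[symmetric] Rr_def using m0pos by (simp add: field_simps)
  have part1: "f ((1 / (\<Sum>k\<in>B. \<rho> k)) *\<^sub>R (\<Sum>k\<in>B. \<rho> k *\<^sub>R x k)) - f xstar
           \<le> (2 * (1 - a s) * D\<^sup>2 / A s + (\<Sum>k\<in>B. \<rho> k * \<gamma> k * Lf\<^sup>2)
                + (\<Sum>k\<in>NN. \<rho> k * \<gamma> k * LgX\<^sup>2)) / (2 * min_subset_sum I m \<rho>)"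
    unfolding xbar rhs1 using fbar SBW SBb by linarith
  have xbX: "(\<Sum>k\<in>B. (\<rho> k / W) *\<^sub>R x k) \<in> X"
    using X_convex finB wsum wpos xBX by (intro convex_sum) auto
  have Gb: "G (\<Sum>k\<in>B. (\<rho> k / W) *\<^sub>R x k) \<le> (\<Sum>k\<in>B. \<rho> k / W * G (x k))"
    unfolding G_def Gmax_def
  proof (rule cSUP_least[OF Dne])
    fix d assume d: "d \<in> \<Delta>"
    have "g (\<Sum>k\<in>B. (\<rho> k / W) *\<^sub>R x k) d \<le> (\<Sum>k\<in>B. \<rho> k / W * g (x k) d)"
      by (rule convex_on_sum[OF finB Bne g_convex[OF d] wsum wpos xBX])
    also have "\<dots> \<le> (\<Sum>k\<in>B. \<rho> k / W * Gmax g \<Delta> (x k))"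
      using gG[OF _ d] xBX wpos unfolding G_def by (intro sum_mono mult_left_mono) auto
    finally show "g (\<Sum>k\<in>B. (\<rho> k / W) *\<^sub>R x k) d \<le> (\<Sum>k\<in>B. \<rho> k / W * (SUP \<delta>\<in>\<Delta>. g (x k) \<delta>))"
      unfolding Gmax_def .
  qed
  also have "\<dots> \<le> (\<Sum>k\<in>B. \<rho> k / W * (\<eta> k + \<epsilon> k))"
    using wpos PB unfolding \<epsilon>_def by (intro sum_mono mult_left_mono) auto
  also have "\<dots> = (\<Sum>k\<in>B. \<rho> k * (\<eta> k + \<epsilon> k)) / (\<Sum>k\<in>B. \<rho> k)"
    unfolding W_def[symmetric] sum_divide_distrib by simp
  finally have part2: "G ((1 / (\<Sum>k\<in>B. \<rho> k)) *\<^sub>R (\<Sum>k\<in>B. \<rho> k *\<^sub>R x k))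
           \<le> (\<Sum>k\<in>B. \<rho> k * (\<eta> k + \<epsilon> k)) / (\<Sum>k\<in>B. \<rho> k)"
    unfolding xbar .
  show ?thesis using part1 part2 by simp
qed

end
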